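(* For the $n\times n$ identity matrix $I_n$ (with $n\ge 2$), $\mathsf{m}^{rd}(+\infty,I_n)\le\frac{n}{3n-4}$.
   Context: For $A\in\{0,1\}^{N\times n}$ and $m\ge0$, unit vectors $U_1,\dots,U_N,V_1,\dots,V_n\in\mathbb{R}^d$ form a margin-$m$, relative-bias-$0$ embedding of $A$ if $\langle U_j,V_i\rangle\ge m$ whenever $A_{ji}=1$ and $\langle U_j,V_i\rangle\le -m$ whenever $A_{ji}=0$. $\mathsf{m}^{rd}(d,A)$ is the supremum of such $m$ in dimension $d$, and $\mathsf{m}^{rd}(+\infty,A)=\sup_d\mathsf{m}^{rd}(d,A)$. *)

theory Defs
  imports "HOL-Analysis.Analysis"
begin

text \<open>Vectors in R^d are represented as functions nat => real, only coordinates k < d matter.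
  A 0/1 matrix of size N x n is a predicate A j i (True = entry 1) for j < N, i < n.\<close>

definition dinner :: "nat \<Rightarrow> (nat \<Rightarrow> real) \<Rightarrow> (nat \<Rightarrow> real) \<Rightarrow> real" where
  "dinner d x y = (\<Sum>k<d. x k * y k)"

definition is_unit :: "nat \<Rightarrow> (nat \<Rightarrow> real) \<Rightarrow> bool" where
  "is_unit d x \<longleftrightarrow> dinner d x x = 1"

text \<open>margin-m, relative-bias-0 embedding of A in dimension d\<close>
definition rd_embedding ::
  "nat \<Rightarrow> nat \<Rightarrow> nat \<Rightarrow> (nat \<Rightarrow> nat \<Rightarrow> bool) \<Rightarrow> real
     \<Rightarrow> (nat \<Rightarrow> nat \<Rightarrow> real) \<Rightarrow> (nat \<Rightarrow> nat \<Rightarrow> real) \<Rightarrow> bool" where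
  "rd_embedding d N n A m U V \<longleftrightarrow>
     (\<forall>j<N. is_unit d (U j)) \<and> (\<forall>i<n. is_unit d (V i)) \<and>
     (\<forall>j<N. \<forall>i<n. (A j i \<longrightarrow> dinner d (U j) (V i) \<ge> m) \<and>
                   (\<not> A j i \<longrightarrow> dinner d (U j) (V i) \<le> - m))"

definition mrd :: "nat \<Rightarrow> nat \<Rightarrow> nat \<Rightarrow> (nat \<Rightarrow> nat \<Rightarrow> bool) \<Rightarrow> real" where
  "mrd d N n A = Sup {m. m \<ge> 0 \<and> (\<exists>U V. rd_embedding d N n A m U V)}"

definition mrd_inf :: "nat \<Rightarrow> nat \<Rightarrow> (nat \<Rightarrow> nat \<Rightarrow> bool) \<Rightarrow> real" where
  "mrd_inf N n A = Sup {m. m \<ge> 0 \<and> (\<exists>d U V. rd_embedding d N n A m U V)}"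

definition id_mat :: "nat \<Rightarrow> nat \<Rightarrow> bool" where
  "id_mat j i \<longleftrightarrow> j = i"

end

theory Submission
  imports Defs
begin

lemma keyW:
  fixes U V :: "nat \<Rightarrow> nat \<Rightarrow> real"
  shows "dinner d (\<lambda>k. real n * U i k - 2 * (\<Sum>j<n. U j k)) (V i)
     = real n * dinner d (U i) (V i) - 2 * (\<Sum>j<n. dinner d (U j) (V i))"
  unfolding dinner_def
  by (simp add: left_diff_distrib sum_subtractf sum_distrib_left sum_distrib_right
      mult.assoc sum.swap[of _ "{..<n}" "{..<d}"])

lemma keyWW:
  fixes U :: "nat \<Rightarrow> nat \<Rightarrow> real"
  assumes "\<forall>j<n. is_unit d (U j)"
  shows "(\<Sum>i<n. dinner d (\<lambda>k. real n * U i k - 2 * (\<Sum>j<n. U j k))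
                         (\<lambda>k. real n * U i k - 2 * (\<Sum>j<n. U j k))) = real n ^ 3"
proof -
  define S where "S k = (\<Sum>j<n. U j k)" for k
  have per_k: "(\<Sum>i<n. (real n * U i k - 2 * S k) * (real n * U i k - 2 * S k))
      = real n ^ 2 * (\<Sum>i<n. U i k * U i k)" for k
  proof -
    have "(\<Sum>i<n. (real n * U i k - 2 * S k) * (real n * U i k - 2 * S k))
       = (\<Sum>i<n. real n ^ 2 * (U i k * U i k) - 4 * real n * S k * U i k + 4 * S k * S k)"
      by (rule sum.cong) (auto simp: algebra_simps power2_eq_square)
    also have "\<dots> = real n ^ 2 * (\<Sum>i<n. U i k * U i k) - 4 * real n * S k * S k + 4 * real n * S k * S k"
    proof -
      have a: "(\<Sum>i<n. 4 * real n * S k * U i k) = 4 * real n * S k * S k"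
        by (simp add: sum_distrib_left[symmetric]) (simp add: S_def)
      have "(\<Sum>i<n. real n ^ 2 * (U i k * U i k) - 4 * real n * S k * U i k + 4 * S k * S k)
        = (\<Sum>i<n. real n ^ 2 * (U i k * U i k)) - (\<Sum>i<n. 4 * real n * S k * U i k) + (\<Sum>i<n. 4 * S k * S k)"
        by (simp add: sum.distrib sum_subtractf)
      moreover have Sk: "(\<Sum>i<n. U i k) = S k" by (simp add: S_def)
      ultimately show ?thesis by (simp add: sum_distrib_left[symmetric] Sk)
    qed
    finally show ?thesis by simp
  qed
  have "(\<Sum>i<n. dinner d (\<lambda>k. real n * U i k - 2 * S k) (\<lambda>k. real n * U i k - 2 * S k))
      = (\<Sum>k<d. \<Sum>i<n. (real n * U i k - 2 * S k) * (real n * U i k - 2 * S k))"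
    unfolding dinner_def by (rule sum.swap)
  also have "\<dots> = real n ^ 2 * (\<Sum>k<d. \<Sum>i<n. U i k * U i k)"
    by (simp add: per_k sum_distrib_left)
  also have "(\<Sum>k<d. \<Sum>i<n. U i k * U i k) = (\<Sum>i<n. dinner d (U i) (U i))"
    unfolding dinner_def by (rule sum.swap)
  also have "\<dots> = real n" using assms by (simp add: is_unit_def)
  finally show ?thesis by (simp add: S_def power3_eq_cube power2_eq_square)
qed

lemma amgm:
  fixes W V :: "nat \<Rightarrow> real" and t :: real
  shows "2 * t * dinner d W V \<le> dinner d W W + t^2 * dinner d V V"
proof -
  have "0 \<le> (\<Sum>k<d. (W k - t * V k)^2)" by (simp add: sum_nonneg)
  also have "\<dots> = dinner d W W - 2 * t * dinner d W V + t^2 * dinner d V V"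
    unfolding dinner_def
    by (simp add: power2_eq_square algebra_simps sum.distrib sum_subtractf sum_distrib_left)
  finally show ?thesis by simp
qed

lemma bound:
  fixes n :: nat
  assumes n2: "n \<ge> 2" and E: "rd_embedding d n n id_mat m U V"
  shows "m \<le> real n / (3 * real n - 4)"
proof -
  define W where "W i = (\<lambda>k. real n * U i k - 2 * (\<Sum>j<n. U j k))" for i
  have uU: "\<forall>j<n. is_unit d (U j)" and uV: "\<forall>i<n. is_unit d (V i)"
    and diag: "\<And>i. i < n \<Longrightarrow> dinner d (U i) (V i) \<ge> m"
    and off: "\<And>i j. i < n \<Longrightarrow> j < n \<Longrightarrow> j \<noteq> i \<Longrightarrow> dinner d (U j) (V i) \<le> - m"
    using E unfolding rd_embedding_def id_mat_def by auto
  have lower: "dinner d (W i) (V i) \<ge> (3 * real n - 4) * m" if i: "i < n" for i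
  proof -
    have split: "(\<Sum>j<n. dinner d (U j) (V i)) = dinner d (U i) (V i) + (\<Sum>j\<in>{..<n}-{i}. dinner d (U j) (V i))"
      using i by (simp add: sum.remove)
    have "(\<Sum>j\<in>{..<n}-{i}. dinner d (U j) (V i)) \<le> (\<Sum>j\<in>{..<n}-{i}. - m)"
      by (rule sum_mono) (use off i in auto)
    also have "\<dots> = - (real n - 1) * m" using i by (simp add: of_nat_diff algebra_simps)
    finally have off_sum: "(\<Sum>j\<in>{..<n}-{i}. dinner d (U j) (V i)) \<le> - (real n - 1) * m" .
    have "real n - 2 \<ge> 0" using n2 by simp
    hence "(real n - 2) * m \<le> (real n - 2) * dinner d (U i) (V i)"
      using diag[OF i] by (simp add: mult_left_mono)
    then show ?thesis unfolding W_def keyW split using off_sum by (simp add: algebra_simps)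
  qed
  have sumWW: "(\<Sum>i<n. dinner d (W i) (W i)) = real n ^ 3"
    unfolding W_def using keyWW[OF uU] by simp
  have npos: "real n > 0" using n2 by simp
  have upper: "2 * real n * (\<Sum>i<n. dinner d (W i) (V i)) \<le> 2 * real n ^ 3"
  proof -
    have "2 * real n * (\<Sum>i<n. dinner d (W i) (V i)) = (\<Sum>i<n. 2 * real n * dinner d (W i) (V i))"
      by (simp add: sum_distrib_left)
    also have "\<dots> \<le> (\<Sum>i<n. dinner d (W i) (W i) + real n ^ 2 * dinner d (V i) (V i))"
      by (rule sum_mono) (rule amgm)
    also have "\<dots> = real n ^ 3 + real n ^ 2 * real n"
      using uV by (simp add: sum.distrib sumWW is_unit_def)
    finally show ?thesis by (simp add: power3_eq_cube power2_eq_square)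
  qed
  have "real n * ((3 * real n - 4) * m) \<le> (\<Sum>i<n. dinner d (W i) (V i))"
  proof -
    have "(\<Sum>i<n. (3 * real n - 4) * m) \<le> (\<Sum>i<n. dinner d (W i) (V i))"
      by (rule sum_mono) (use lower in auto)
    thus ?thesis by simp
  qed
  moreover have "(\<Sum>i<n. dinner d (W i) (V i)) \<le> real n * real n"
  proof (rule mult_left_le_imp_le[of "2 * real n"])
    show "2 * real n * (\<Sum>i<n. dinner d (W i) (V i)) \<le> 2 * real n * (real n * real n)"
      using upper by (simp add: power3_eq_cube)
  qed (use npos in simp)
  ultimately have "real n * ((3 * real n - 4) * m) \<le> real n * real n" by linarith
  hence "(3 * real n - 4) * m \<le> real n" using npos by (rule mult_left_le_imp_le)
  moreover have "3 * real n - 4 > 0" using n2 by simp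
  ultimately show ?thesis by (simp add: field_simps mult.commute)
qed

theorem corollaryD1:
  fixes n :: nat
  assumes "n \<ge> 2"
  shows "mrd_inf n n id_mat \<le> real n / (3 * real n - 4)"
proof -
  define E :: "nat \<Rightarrow> nat \<Rightarrow> real" where "E j k = (if k = j then 1 else 0)" for j k
  have din: "dinner n (E j) (E i) = (if j = i then 1 else 0)" if "i < n" "j < n" for i j
    unfolding dinner_def E_def using that
    by (simp add: if_distrib[of "\<lambda>x. x * _"] sum.delta cong: if_cong)
  have "rd_embedding n n n id_mat 0 E E"
    unfolding rd_embedding_def is_unit_def id_mat_def by (simp add: din)
  hence ne: "0 \<in> {m. m \<ge> 0 \<and> (\<exists>d U V. rd_embedding d n n id_mat m U V)}" by blast
  show ?thesis unfolding mrd_inf_def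
    by (rule cSup_least) (use ne bound[OF assms] in auto)
qed

end
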